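(* Let $n\ge2$ be an integer, $\lambda\in(2n-1,2n)$, and $w_m=\phi(|m|/\lambda)$ for $|m|\le 2n-1$. Put $\|\mathbf{w}^0\|_1=1+2\sum_{l=1}^{n-1}w_{2l}$ and $\|\mathbf{w}^1\|_1=2\sum_{l=0}^{n-1}w_{2l+1}$, and consider the sub-masks of $S_{1,\mathbf{w}^\lambda}$, \[ a^0_l=\frac{w_{2l}}{\|\mathbf{w}^0\|_1}\ (l=1-n,\ldots,n-1),\qquad a^1_l=\frac{w_{2l-1}}{\|\mathbf{w}^1\|_1}\ (l=1-n,\ldots,n), \] and the difference sub-masks \[ q^0_j=\sum_{l=1-n}^{j}(a^0_l-a^1_l),\qquad q^1_j=\sum_{l=j}^{n-1}(a^0_l-a^1_{l+1}),\qquad j=1-n,\ldots,n-1. \] If \[ \frac{\sum_{l=j_0}^{n-1}w_{2l+1}}{\sum_{l=j_0}^{n-1} w_{2l}} < \frac{\|\mathbf{w}^1\|_1}{\|\mathbf{w}^0\|_1}<\frac{\sum_{l=j_1}^{n-1}w_{2l+1}}{\sum_{l=j_1+1}^{n-1} w_{2l}} \quad\text{for all } j_0=1,\ldots,n-1,\ j_1=1,\ldots,n-2, \] then $q^0_j>0$ and $q^1_j>0$ for all $j=1-n,\ldots,n-1$.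
   Context: $\phi:[0,1]\to(0,1]$ is a non-increasing function with $\phi(0)=1$. The scheme $S_{1,\mathbf{w}^\lambda}$ (weighted local polynomial regression of degree 1) acts by $(S\mathbf{f})_{2j}=\sum_{l=1-n}^{n-1}a^0_l f_{j+l}$, $(S\mathbf{f})_{2j+1}=\sum_{l=1-n}^{n}a^1_l f_{j+l}$; the numbers $q^0_j,q^1_j$ are the even and odd sub-masks of its difference scheme (the scheme with symbol $q(z)$ satisfying $a(z)=(1+z)q(z)$). *)

theory Defs
  imports "HOL-Analysis.Analysis"
begin

definition wgt :: "(real \<Rightarrow> real) \<Rightarrow> real \<Rightarrow> int \<Rightarrow> real" where
  "wgt \<phi> lam m = \<phi> (real_of_int \<bar>m\<bar> / lam)"

definition wnorm0 :: "(real \<Rightarrow> real) \<Rightarrow> real \<Rightarrow> nat \<Rightarrow> real" where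
  "wnorm0 \<phi> lam n = 1 + 2 * (\<Sum>l=1..int n - 1. wgt \<phi> lam (2*l))"

definition wnorm1 :: "(real \<Rightarrow> real) \<Rightarrow> real \<Rightarrow> nat \<Rightarrow> real" where
  "wnorm1 \<phi> lam n = 2 * (\<Sum>l=0..int n - 1. wgt \<phi> lam (2*l+1))"

definition amask0 :: "(real \<Rightarrow> real) \<Rightarrow> real \<Rightarrow> nat \<Rightarrow> int \<Rightarrow> real" where
  "amask0 \<phi> lam n l = wgt \<phi> lam (2*l) / wnorm0 \<phi> lam n"

definition amask1 :: "(real \<Rightarrow> real) \<Rightarrow> real \<Rightarrow> nat \<Rightarrow> int \<Rightarrow> real" where
  "amask1 \<phi> lam n l = wgt \<phi> lam (2*l-1) / wnorm1 \<phi> lam n"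

definition qmask0 :: "(real \<Rightarrow> real) \<Rightarrow> real \<Rightarrow> nat \<Rightarrow> int \<Rightarrow> real" where
  "qmask0 \<phi> lam n j = (\<Sum>l=1 - int n..j. amask0 \<phi> lam n l - amask1 \<phi> lam n l)"

definition qmask1 :: "(real \<Rightarrow> real) \<Rightarrow> real \<Rightarrow> nat \<Rightarrow> int \<Rightarrow> real" where
  "qmask1 \<phi> lam n j = (\<Sum>l=j..int n - 1. amask0 \<phi> lam n l - amask1 \<phi> lam n (l+1))"

end

theory Submission
  imports Defs
begin

lemma sum_reflect_int:
  "(\<Sum>l=(a::int)..b. f l) = (\<Sum>l=-b..-a. f (-l))"
  by (rule sum.reindex_bij_witness[of _ uminus uminus]) auto

lemma sum_shift_int:
  "(\<Sum>l=(a::int)..b. f l) = (\<Sum>l=a-1..b-1. f (l+1))"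
  by (rule sum.reindex_bij_witness[of _ "\<lambda>l. l+1" "\<lambda>l. l - 1"]) auto

lemma sum_split_int:
  assumes "a \<le> b+1" "b \<le> c"
  shows "(\<Sum>l=(a::int)..c. f l) = (\<Sum>l=a..b. f l) + (\<Sum>l=b+1..c. f l)"
proof -
  have "{a..c} = {a..b} \<union> {b+1..c}" using assms by auto
  then show ?thesis by (simp add: sum.union_disjoint)
qed

lemma frac_swap:
  fixes a b c d :: real
  assumes "a/b < c/d" "b>0" "d>0" "c>0"
  shows "a/c < b/d"
  using assms by (simp add: field_simps)

lemma frac_swap2:
  fixes a b c d :: real
  assumes "c/d < a/b" "b>0" "d>0" "c>0"
  shows "b/d < a/c"
  using assms by (simp add: field_simps)

theorem lemma4p3:
  fixes \<phi> :: "real \<Rightarrow> real" and lam :: real and n :: nat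
  assumes phi_range: "\<And>x. x \<in> {0..1} \<Longrightarrow> 0 < \<phi> x \<and> \<phi> x \<le> 1"
    and phi_mono: "\<And>x y. x \<in> {0..1} \<Longrightarrow> y \<in> {0..1} \<Longrightarrow> x \<le> y \<Longrightarrow> \<phi> y \<le> \<phi> x"
    and phi0: "\<phi> 0 = 1"
    and n2: "n \<ge> 2"
    and lam: "2 * real n - 1 < lam" "lam < 2 * real n"
    and cond0: "\<And>j0. j0 \<in> {1..int n - 1} \<Longrightarrow>
        (\<Sum>l=j0..int n - 1. wgt \<phi> lam (2*l+1)) / (\<Sum>l=j0..int n - 1. wgt \<phi> lam (2*l))
          < wnorm1 \<phi> lam n / wnorm0 \<phi> lam n"
    and cond1: "\<And>j1. j1 \<in> {1..int n - 2} \<Longrightarrow>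
        wnorm1 \<phi> lam n / wnorm0 \<phi> lam n
          < (\<Sum>l=j1..int n - 1. wgt \<phi> lam (2*l+1)) / (\<Sum>l=j1+1..int n - 1. wgt \<phi> lam (2*l))"
  shows "\<forall>j \<in> {1 - int n..int n - 1}. qmask0 \<phi> lam n j > 0 \<and> qmask1 \<phi> lam n j > 0"
proof -
  define w where "w = wgt \<phi> lam"
  define W0 where "W0 = wnorm0 \<phi> lam n"
  define W1 where "W1 = wnorm1 \<phi> lam n"
  have rn: "real n \<ge> 2" using n2 by simp
  have lam0: "lam > 0" using lam rn by linarith
  have wpos: "w m > 0" if "\<bar>m\<bar> \<le> 2*int n - 1" for m
  proof -
    have "real_of_int \<bar>m\<bar> \<le> real_of_int (2*int n - 1)" using that
      by (simp only: of_int_le_iff)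
    then have "real_of_int \<bar>m\<bar> \<le> 2 * real n - 1" by simp
    then have "real_of_int \<bar>m\<bar> / lam \<le> 1" using lam lam0 by (simp add: divide_le_eq_1)
    moreover have "real_of_int \<bar>m\<bar> / lam \<ge> 0" using lam0 by simp
    ultimately show ?thesis using phi_range unfolding w_def wgt_def by auto
  qed
  have wabs: "w a = w b" if "\<bar>a\<bar> = \<bar>b\<bar>" for a b
    unfolding w_def wgt_def using that by simp
  have w0: "w 0 = 1" by (simp add: w_def wgt_def phi0)
  have E1nn: "(\<Sum>l=1..int n - 1. w (2*l)) \<ge> 0"
    by (rule sum_nonneg, rule less_imp_le, rule wpos) (auto simp: abs_if)
  have W0pos: "W0 > 0" using E1nn by (simp add: W0_def wnorm0_def w_def)
  have W1pos: "W1 > 0"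
    unfolding W1_def wnorm1_def w_def[symmetric]
    using n2 by (auto intro!: sum_pos wpos simp: abs_if)
  have W0eq: "W0 = (\<Sum>l=1-int n..int n-1. w (2*l))"
  proof -
    have "(\<Sum>l=1-int n..int n-1. w (2*l)) = (\<Sum>l=1-int n..-1. w (2*l)) + (\<Sum>l=0..int n-1. w (2*l))"
      using sum_split_int[of "1-int n" "-1" "int n - 1" "\<lambda>l. w (2*l)"] n2 by simp
    also have "(\<Sum>l=1-int n..-1. w (2*l)) = (\<Sum>l=1..int n-1. w (2*l))"
      by (subst sum_reflect_int) (auto intro!: sum.cong wabs)
    also have "(\<Sum>l=0..int n-1. w (2*l)) = (\<Sum>l=0..0. w (2*l)) + (\<Sum>l=1..int n-1. w (2*l))"
      using sum_split_int[of 0 0 "int n - 1" "\<lambda>l. w (2*l)"] n2 by simp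
    finally show ?thesis using w0 by (simp add: W0_def wnorm0_def w_def)
  qed
  have W1eq: "W1 = (\<Sum>l=1-int n..int n. w (2*l-1))"
  proof -
    have "(\<Sum>l=1-int n..int n. w (2*l-1)) = (\<Sum>l=1-int n..0. w (2*l-1)) + (\<Sum>l=1..int n. w (2*l-1))"
      using sum_split_int[of "1-int n" 0 "int n" "\<lambda>l. w (2*l-1)"] n2 by simp
    also have "(\<Sum>l=1-int n..0. w (2*l-1)) = (\<Sum>l=0..int n-1. w (2*l+1))"
      by (subst sum_reflect_int) (auto intro!: sum.cong wabs)
    also have "(\<Sum>l=1..int n. w (2*l-1)) = (\<Sum>l=0..int n-1. w (2*l+1))"
      by (subst sum_shift_int) (auto intro!: sum.cong wabs)
    finally show ?thesis by (simp add: W1_def wnorm1_def w_def)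
  qed
  have q0f: "qmask0 \<phi> lam n j = (\<Sum>l=1-int n..j. w (2*l))/W0 - (\<Sum>l=1-int n..j. w (2*l-1))/W1" for j
    by (simp add: qmask0_def amask0_def amask1_def sum_subtractf sum_divide_distrib w_def W0_def W1_def)
  have q1f: "qmask1 \<phi> lam n j = qmask0 \<phi> lam n (-j)" for j
    unfolding qmask1_def qmask0_def
    apply (subst sum_reflect_int)
    apply (rule sum.cong)
     apply simp
    apply (simp add: amask0_def amask1_def)
    apply (subgoal_tac "\<bar>2 * (1 - x) - 1\<bar> = \<bar>2*x-1\<bar>")
     apply (simp add: wgt_def)
    apply arith
    done
  have q0pos: "qmask0 \<phi> lam n j > 0" if j: "1 - int n \<le> j" "j \<le> int n - 1" for j
  proof (cases "j \<le> -1")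
    case True
    define E where "E = (\<Sum>l=-j..int n-1. w (2*l))"
    define Od where "Od = (\<Sum>l=-j..int n-1. w (2*l+1))"
    have h1: "(\<Sum>l=1-int n..j. w (2*l)) = E"
      unfolding E_def by (subst sum_reflect_int) (auto intro!: sum.cong wabs)
    have h2: "(\<Sum>l=1-int n..j. w (2*l-1)) = Od"
      unfolding Od_def by (subst sum_reflect_int) (auto intro!: sum.cong wabs)
    have Epos: "E > 0" unfolding E_def using True j by (auto intro!: sum_pos wpos simp: abs_if)
    have "Od/E < W1/W0" using cond0[of "-j"] True j unfolding E_def Od_def W0_def W1_def w_def by simp
    then have "Od/W1 < E/W0" using frac_swap Epos W0pos W1pos by blast
    then show ?thesis using q0f h1 h2 by simp
  next
    case False
    define E where "E = (\<Sum>l=j+1..int n-1. w (2*l))"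
    define Od where "Od = (\<Sum>l=j..int n-1. w (2*l+1))"
    have h1: "(\<Sum>l=1-int n..j. w (2*l)) = W0 - E"
      unfolding E_def W0eq using sum_split_int[of "1-int n" j "int n - 1" "\<lambda>l. w (2*l)"] j by simp
    have "W1 = (\<Sum>l=1-int n..j. w (2*l-1)) + (\<Sum>l=j+1..int n. w (2*l-1))"
      unfolding W1eq using sum_split_int[of "1-int n" j "int n" "\<lambda>l. w (2*l-1)"] j by simp
    moreover have "(\<Sum>l=j+1..int n. w (2*l-1)) = Od"
      unfolding Od_def by (subst sum_shift_int) (auto intro!: sum.cong wabs)
    ultimately have h2: "(\<Sum>l=1-int n..j. w (2*l-1)) = W1 - Od" by simp
    have q: "qmask0 \<phi> lam n j = Od/W1 - E/W0"
    proof -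
      have "qmask0 \<phi> lam n j = (W0 - E)/W0 - (W1 - Od)/W1" unfolding q0f h1 h2 ..
      also have "\<dots> = Od/W1 - E/W0" using W0pos W1pos by (simp add: diff_divide_distrib)
      finally show ?thesis .
    qed
    show ?thesis
    proof (cases "j = 0")
      case True
      have oE: "Od = W1/2" unfolding Od_def W1_def wnorm1_def w_def True by simp
      have eE: "E = (W0 - 1)/2" unfolding E_def W0_def wnorm0_def w_def True by simp
      have "qmask0 \<phi> lam n j = (W1/2)/W1 - ((W0-1)/2)/W0" by (simp only: q oE eE)
      also have "\<dots> = 1/(2*W0)" using W0pos W1pos by (simp add: field_simps)
      finally have "qmask0 \<phi> lam n j = 1/(2*W0)" .
      then show ?thesis using W0pos by simp
    next
      case j0: False
      show ?thesis
      proof (cases "j = int n - 1")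
        case True
        then have "E = 0" unfolding E_def by simp
        moreover have "Od > 0" unfolding Od_def using True j n2 by (auto intro!: sum_pos wpos simp: abs_if)
        ultimately show ?thesis using q W1pos by simp
      next
        case jn: False
        have Epos: "E > 0" unfolding E_def using jn j False by (auto intro!: sum_pos wpos simp: abs_if)
        have Odpos: "Od > 0" unfolding Od_def using j False by (auto intro!: sum_pos wpos simp: abs_if)
        have "W1/W0 < Od/E" using cond1[of j] False j0 jn j
          unfolding E_def Od_def W0_def W1_def w_def by simp
        then have "E/W0 < Od/W1" using frac_swap2 Epos W0pos W1pos by blast
        then show ?thesis using q by simp
      qed
    qed
  qed
  show ?thesis using q0pos q1f by auto
qed

end
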